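(* Let $\gamma$ be a nonnegative random variable whose moment generating function is \[ \mathcal{M}_{\gamma}(s)=\mathbb{E}[e^{s\gamma}]=\sum_{k=1}^K c_k\prod_{i=1}^{n_k}\left(1-\frac{s}{a_{k,i}}\right)^{-b_{k,i}}, \] where $\operatorname{Re}[a_{k,i}]>0$ for all $k,i$; $B_k:=\sum_{i=1}^{n_k}b_{k,i}>0$ for every $k$; and $\sum_{k=1}^K c_k=1$. Then for every $p>0$, \[ \mathbb{E}\big[Q(\sqrt{p\gamma})\big]=\frac{1}{2\pi}\sum_{k=1}^K c_k\left\{\prod_{i=1}^{n_k}(a_{k,i})^{b_{k,i}}\right\}\left(\frac2p\right)^{B_k}\int_0^1 u^{-\frac12+B_k}(1-u)^{-\frac12}\prod_{i=1}^{n_k}\left(1+\frac{2a_{k,i}}{p}u\right)^{-b_{k,i}}du. \]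
   Context: $Q(x)=\frac{1}{\sqrt{2\pi}}\int_x^\infty e^{-t^2/2}\,dt$ is the Gaussian $Q$-function. The moment generating function of a nonnegative random variable with density $f_\gamma$ is $\mathcal{M}_\gamma(s)=\mathbb{E}[e^{s\gamma}]$ (Laplace transform of $f_\gamma$ at $-s$); complex powers use the principal branch. *)

theory Defs
  imports "HOL-Probability.Probability"
begin

definition Qfun :: "real \<Rightarrow> real" where
  "Qfun x = (1 / sqrt (2 * pi)) * (LBINT t:{x..}. exp (- (t\<^sup>2) / 2))"

end

theory Submission
  imports Defs
begin

lemma gauss_pos_nn:
  "(\<integral>\<^sup>+s. ennreal (exp (- s\<^sup>2)) * indicator {0<..} s \<partial>lborel) = ennreal (sqrt pi / 2)"
proof -
  have "(\<integral>\<^sup>+s. ennreal (exp (- s\<^sup>2)) * indicator {0<..} s \<partial>lborel)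
      = (\<integral>\<^sup>+s. ennreal (indicator {0..} s *\<^sub>R exp (- s\<^sup>2)) \<partial>lborel)"
    by (intro nn_integral_cong_AE AE_I[where N="{0}"]) (auto split: split_indicator)
  also have "\<dots> = ennreal (sqrt pi / 2)"
    using gaussian_moment_0
    by (subst nn_integral_eq_integral) (auto simp: has_bochner_integral_iff)
  finally show ?thesis .
qed

lemma inner_t:
  fixes y :: real assumes "0 < y"
  shows "(\<integral>\<^sup>+t. ennreal (y * exp (- (y\<^sup>2 * (1 + t\<^sup>2)) / 2)) * indicator {0<..} t \<partial>lborel)
     = ennreal (sqrt 2 * (sqrt pi / 2) * exp (- y\<^sup>2 / 2))"
proof -
  define c where "c = sqrt 2 / y"
  have c: "c > 0" using assms by (simp add: c_def)
  have "(\<integral>\<^sup>+t. ennreal (y * exp (- (y\<^sup>2 * (1 + t\<^sup>2)) / 2)) * indicator {0<..} t \<partial>lborel)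
      = ennreal \<bar>c\<bar> * (\<integral>\<^sup>+s. ennreal (y * exp (- (y\<^sup>2 * (1 + (0 + c * s)\<^sup>2)) / 2)) * indicator {0<..} (0 + c * s) \<partial>lborel)"
    using c by (intro nn_integral_real_affine) auto
  also have "\<dots> = ennreal c * (\<integral>\<^sup>+s. ennreal (y * exp (- y\<^sup>2 / 2)) * (ennreal (exp (- s\<^sup>2)) * indicator {0<..} s) \<partial>lborel)"
  proof -
    have e: "y\<^sup>2 * (1 + (c * s)\<^sup>2) / 2 = y\<^sup>2/2 + s\<^sup>2" for s
      using assms by (simp add: c_def power_mult_distrib field_simps)
    have "ennreal (y * exp (- (y\<^sup>2 * (1 + (0 + c * s)\<^sup>2)) / 2)) * indicator {0<..} (0 + c * s)
       = ennreal (y * exp (- y\<^sup>2 / 2)) * (ennreal (exp (- s\<^sup>2)) * indicator {0<..} s)" for s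
    proof -
      have "exp (- (y\<^sup>2 * (1 + (0 + c * s)\<^sup>2)) / 2) = exp (- y\<^sup>2 / 2) * exp (- s\<^sup>2)"
        using e[of s] by (simp add: exp_add[symmetric] minus_divide_left[symmetric])
      moreover have "(0 < c * s) = (0 < s)" using c by (simp add: zero_less_mult_iff)
      ultimately show ?thesis using assms
        by (auto simp: ennreal_mult'[symmetric] ennreal_mult[symmetric] split: split_indicator)
    qed
    then show ?thesis using c by simp
  qed
  also have "\<dots> = ennreal c * (ennreal (y * exp (- y\<^sup>2 / 2)) * ennreal (sqrt pi / 2))"
    by (subst nn_integral_cmult) (auto simp: gauss_pos_nn)
  also have "\<dots> = ennreal (sqrt 2 * (sqrt pi / 2) * exp (- y\<^sup>2 / 2))"
    using c assms by (simp add: ennreal_mult[symmetric] c_def)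
  finally show ?thesis .
qed

lemma ftc_y:
  fixes x t :: real assumes "0 \<le> x"
  shows "(\<integral>\<^sup>+y. ennreal (y * exp (- (y\<^sup>2 * (1 + t\<^sup>2)) / 2)) * indicator {x..} y \<partial>lborel)
     = ennreal (exp (- (x\<^sup>2 * (1 + t\<^sup>2)) / 2) / (1 + t\<^sup>2))"
proof -
  have pos: "0 < 1 + t\<^sup>2" by (simp add: add_pos_nonneg)
  have lim: "((\<lambda>y. - exp (- (y\<^sup>2 * (1 + t\<^sup>2)) / 2) / (1 + t\<^sup>2)) \<longlongrightarrow> 0) at_top"
  proof -
    have f: "filterlim (\<lambda>y::real. y\<^sup>2 * ((1 + t\<^sup>2) / 2)) at_top at_top"
    proof -
      have "filterlim (\<lambda>y::real. ((1 + t\<^sup>2) / 2) * y\<^sup>2) at_top at_top"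
      proof (rule filterlim_tendsto_pos_mult_at_top[OF tendsto_const])
        show "0 < (1 + t\<^sup>2) / 2" using pos by simp
        show "filterlim (\<lambda>y::real. y\<^sup>2) at_top at_top"
          by (intro filterlim_pow_at_top filterlim_ident) simp
      qed
      then show ?thesis by (simp add: mult.commute)
    qed
    have "((\<lambda>y. exp (- (y\<^sup>2 * ((1 + t\<^sup>2) / 2)))) \<longlongrightarrow> 0) at_top"
      by (rule filterlim_compose[OF exp_at_bot filterlim_compose[OF filterlim_uminus_at_bot_at_top f]])
    from tendsto_divide_zero[OF tendsto_minus[OF this, simplified], of "1 + t\<^sup>2"]
    have "((\<lambda>y. - exp (- (y\<^sup>2 * ((1 + t\<^sup>2) / 2))) / (1 + t\<^sup>2)) \<longlongrightarrow> 0) at_top"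
      by simp
    moreover have "(\<lambda>y. - exp (- (y\<^sup>2 * (1 + t\<^sup>2)) / 2) / (1 + t\<^sup>2))
        = (\<lambda>y. - exp (- (y\<^sup>2 * ((1 + t\<^sup>2) / 2))) / (1 + t\<^sup>2))"
      by (simp only: times_divide_eq_right minus_divide_left)
    ultimately show ?thesis by simp
  qed
  have "(\<integral>\<^sup>+y. ennreal (y * exp (- (y\<^sup>2 * (1 + t\<^sup>2)) / 2)) * indicator {x..} y \<partial>lborel)
     = 0 - (- exp (- (x\<^sup>2 * (1 + t\<^sup>2)) / 2) / (1 + t\<^sup>2))"
  proof (rule nn_integral_FTC_atLeast[OF _ _ _ lim])
    fix y :: real
    show "((\<lambda>y. - exp (- (y\<^sup>2 * (1 + t\<^sup>2)) / 2) / (1 + t\<^sup>2)) has_real_derivative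
       y * exp (- (y\<^sup>2 * (1 + t\<^sup>2)) / 2)) (at y)"
    proof -
      have "((\<lambda>y. - (1 / (1 + t\<^sup>2)) * exp (- (y\<^sup>2 * (1 + t\<^sup>2)) / 2)) has_real_derivative
         - (1 / (1 + t\<^sup>2)) * (exp (- (y\<^sup>2 * (1 + t\<^sup>2)) / 2) * (- (2 * y * (1 + t\<^sup>2)) / 2))) (at y)"
        by (auto intro!: derivative_eq_intros)
      moreover have "- (1 / (1 + t\<^sup>2)) * (exp (- (y\<^sup>2 * (1 + t\<^sup>2)) / 2) * (- (2 * y * (1 + t\<^sup>2)) / 2))
          = y * exp (- (y\<^sup>2 * (1 + t\<^sup>2)) / 2)" using pos by (simp add: field_simps)
      ultimately show ?thesis by simp
    qed
    assume "x \<le> y" then show "0 \<le> y * exp (- (y\<^sup>2 * (1 + t\<^sup>2)) / 2)" using assms by simp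
  qed simp
  then show ?thesis by simp
qed

lemma integrable_gauss: "integrable lborel (\<lambda>y::real. exp (- y\<^sup>2 / 2))"
proof -
  have "integrable lborel (\<lambda>y. sqrt (2 * pi) * normal_density 0 1 y)"
    by (intro integrable_mult_right integrable_normal_density) simp
  moreover have "(\<lambda>y. sqrt (2 * pi) * normal_density 0 1 y) = (\<lambda>y::real. exp (- y\<^sup>2 / 2))"
    unfolding normal_density_def by (simp add: fun_eq_iff)
  ultimately show ?thesis by simp
qed

lemma tail_nn:
  "(\<integral>\<^sup>+y. ennreal (exp (- y\<^sup>2 / 2)) * indicator {x..} y \<partial>lborel) = ennreal (sqrt (2 * pi) * Qfun x)"
proof -
  have I: "integrable lborel (\<lambda>y. indicator {x..} y *\<^sub>R exp (- y\<^sup>2 / 2))"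
    by (intro integrable_mult_indicator integrable_gauss) auto
  have "(\<integral>\<^sup>+y. ennreal (exp (- y\<^sup>2 / 2)) * indicator {x..} y \<partial>lborel)
      = (\<integral>\<^sup>+y. ennreal (indicator {x..} y *\<^sub>R exp (- y\<^sup>2 / 2)) \<partial>lborel)"
    by (intro nn_integral_cong) (auto split: split_indicator)
  also have "\<dots> = ennreal (LBINT y:{x..}. exp (- y\<^sup>2 / 2))"
    using I by (subst nn_integral_eq_integral) (auto simp: set_lebesgue_integral_def)
  also have "(LBINT y:{x..}. exp (- y\<^sup>2 / 2)) = sqrt (2 * pi) * Qfun x"
    by (simp add: Qfun_def)
  finally show ?thesis .
qed

lemma Qfun_nonneg: "0 \<le> Qfun x"
  unfolding Qfun_def set_lebesgue_integral_def
  by (intro mult_nonneg_nonneg integral_nonneg) (auto simp: indicator_def)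

lemma craig_t:
  fixes x :: real assumes x: "0 \<le> x"
  shows "(\<integral>\<^sup>+t. ennreal (exp (- (x\<^sup>2 * (1 + t\<^sup>2)) / 2) / (1 + t\<^sup>2)) * indicator {0<..} t \<partial>lborel)
     = ennreal (pi * Qfun x)"
proof -
  let ?G = "\<lambda>y t. ennreal (y * exp (- (y\<^sup>2 * (1 + t\<^sup>2)) / 2))"
  have "(\<integral>\<^sup>+t. ennreal (exp (- (x\<^sup>2 * (1 + t\<^sup>2)) / 2) / (1 + t\<^sup>2)) * indicator {0<..} t \<partial>lborel)
     = (\<integral>\<^sup>+t. \<integral>\<^sup>+y. ?G y t * indicator {x..} y * indicator {0<..} t \<partial>lborel \<partial>lborel)"
    by (intro nn_integral_cong, subst ftc_y[OF x, symmetric]) (simp add: nn_integral_multc)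
  also have "\<dots> = (\<integral>\<^sup>+y. \<integral>\<^sup>+t. ?G y t * indicator {x..} y * indicator {0<..} t \<partial>lborel \<partial>lborel)"
    by (rule lborel_pair.Fubini') auto
  also have "\<dots> = (\<integral>\<^sup>+y. ennreal (sqrt 2 * (sqrt pi / 2)) * (ennreal (exp (- y\<^sup>2 / 2)) * indicator {x..} y) \<partial>lborel)"
  proof (intro nn_integral_cong_AE eventually_mono[OF AE_lborel_singleton[of 0]])
    fix y :: real assume "y \<noteq> 0"
    then have y0: "y \<noteq> 0" by auto
    show "(\<integral>\<^sup>+t. ?G y t * indicator {x..} y * indicator {0<..} t \<partial>lborel)
       = ennreal (sqrt 2 * (sqrt pi / 2)) * (ennreal (exp (- y\<^sup>2 / 2)) * indicator {x..} y)"
    proof (cases "x \<le> y")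
      case True
      then have "0 < y" using x y0 by auto
      have "(\<integral>\<^sup>+t. ?G y t * indicator {x..} y * indicator {0<..} t \<partial>lborel)
          = (\<integral>\<^sup>+t. ?G y t * indicator {0<..} t \<partial>lborel)" using True by simp
      also have "\<dots> = ennreal (sqrt 2 * (sqrt pi / 2) * exp (- y\<^sup>2 / 2))"
        by (rule inner_t[OF \<open>0 < y\<close>])
      also have "\<dots> = ennreal (sqrt 2 * (sqrt pi / 2)) * (ennreal (exp (- y\<^sup>2 / 2)) * indicator {x..} y)"
        using True by (simp add: ennreal_mult[symmetric] field_simps)
      finally show ?thesis .
    qed simp
  qed
  also have "\<dots> = ennreal (sqrt 2 * (sqrt pi / 2)) * ennreal (sqrt (2 * pi) * Qfun x)"
    using tail_nn[of x] by (subst nn_integral_cmult) auto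
  also have "\<dots> = ennreal (sqrt 2 * (sqrt pi / 2) * (sqrt (2 * pi) * Qfun x))"
    using Qfun_nonneg[of x] by (simp add: ennreal_mult[symmetric])
  also have "sqrt 2 * (sqrt pi / 2) * (sqrt (2 * pi) * Qfun x) = pi * Qfun x"
  proof -
    have "sqrt 2 * (sqrt pi * (sqrt 2 * sqrt pi)) = (sqrt 2 * sqrt 2) * (sqrt pi * sqrt pi)"
      by (simp only: mult_ac)
    also have "\<dots> = pi * 2" by simp
    finally show ?thesis by (simp add: real_sqrt_mult)
  qed
  finally show ?thesis .
qed

lemma craig_t_HK:
  fixes x :: real assumes x: "0 \<le> x"
  shows "(\<lambda>t. exp (- (x\<^sup>2 * (1 + t\<^sup>2)) / 2) / (1 + t\<^sup>2)) absolutely_integrable_on {0<..}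
     \<and> integral {0<..} (\<lambda>t. exp (- (x\<^sup>2 * (1 + t\<^sup>2)) / 2) / (1 + t\<^sup>2)) = pi * Qfun x"
proof -
  let ?f = "\<lambda>t::real. exp (- (x\<^sup>2 * (1 + t\<^sup>2)) / 2) / (1 + t\<^sup>2)"
  have pos: "0 < 1 + t\<^sup>2" for t :: real by (simp add: add_pos_nonneg)
  have "((\<lambda>t. indicator {0<..} t * ?f t) has_integral (pi * Qfun x)) UNIV"
  proof (rule nn_integral_has_integral)
    show "(\<lambda>t. indicator {0<..} t * ?f t) \<in> borel_measurable borel" by measurable
    show "0 \<le> indicator {0<..} t * ?f t" for t using pos[of t] by simp
    show "0 \<le> pi * Qfun x" using Qfun_nonneg[of x] by simp
    have "(\<integral>\<^sup>+t. ennreal (indicator {0<..} t * ?f t) \<partial>lborel) = (\<integral>\<^sup>+t. ennreal (?f t) * indicator {0<..} t \<partial>lborel)"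
      by (intro nn_integral_cong) (auto split: split_indicator)
    then show "(\<integral>\<^sup>+t. ennreal (indicator {0<..} t * ?f t) \<partial>lborel) = ennreal (pi * Qfun x)"
      using craig_t[OF x] by simp
  qed
  moreover have "(\<lambda>t. indicator {0<..} t * ?f t) = (\<lambda>t. if t \<in> {0<..} then ?f t else 0)"
    by (auto simp: fun_eq_iff)
  ultimately have I: "(?f has_integral (pi * Qfun x)) {0<..}"
    by (simp only: has_integral_restrict_UNIV)
  have "?f absolutely_integrable_on {0<..}"
  proof (rule nonnegative_absolutely_integrable_1)
    show "?f integrable_on {0<..}" using I by (rule has_integral_integrable)
    show "0 \<le> ?f t" if "t \<in> {0<..}" for t using pos[of t] by simp
  qed
  moreover have "integral {0<..} ?f = pi * Qfun x" using I by (rule integral_unique)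
  ultimately show ?thesis by (rule conjI)
qed

lemma craig_u:
  fixes x :: real assumes x: "0 \<le> x"
  shows "(\<integral>\<^sup>+u. ennreal (exp (- x\<^sup>2 / (2 * u)) / (2 * sqrt (u * (1 - u)))) * indicator {0<..<1} u \<partial>lborel)
     = ennreal (pi * Qfun x)"
proof -
  let ?f = "\<lambda>t::real. exp (- (x\<^sup>2 * (1 + t\<^sup>2)) / 2) / (1 + t\<^sup>2)"
  define g where "g u = sqrt ((1 - u) / u)" for u :: real
  define g' where "g' u = - (1 / u\<^sup>2) / (2 * sqrt ((1 - u) / u))" for u :: real
  let ?S = "{0<..<1::real}"
  have der: "(g has_field_derivative g' u) (at u within ?S)" if "u \<in> ?S" for u
  proof -
    have q: "0 < (1 - u) / u" using that by auto
    have "((\<lambda>u. sqrt ((1 - u) / u)) has_real_derivative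
         (1 / (2 * sqrt ((1 - u) / u))) * ((- 1 * u - (1 - u) * 1) / (u * u))) (at u)"
      using that q by (auto intro!: derivative_eq_intros simp: inverse_eq_divide divide_less_0_iff)
    moreover have "(1 / (2 * sqrt ((1 - u) / u))) * ((- 1 * u - (1 - u) * 1) / (u * u)) = g' u"
      using that by (simp add: g'_def power2_eq_square field_simps)
    ultimately show ?thesis unfolding g_def by (auto intro: has_field_derivative_at_within)
  qed
  have inj: "inj_on g ?S"
  proof (rule inj_onI)
    fix u v assume u: "u \<in> ?S" and v: "v \<in> ?S" and e: "g u = g v"
    then have "(1 - u) / u = (1 - v) / v" unfolding g_def by (auto simp: real_sqrt_eq_iff)
    with u v have "1 / u = 1 / v" by (simp add: diff_divide_distrib)
    then show "u = v" by simp
  qed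
  have img: "g ` ?S = {0<..}"
  proof
    show "g ` ?S \<subseteq> {0<..}" by (auto simp: g_def)
    show "{0<..} \<subseteq> g ` ?S"
    proof
      fix t :: real assume t: "t \<in> {0<..}"
      define u where "u = 1 / (1 + t\<^sup>2)"
      have u: "u \<in> ?S" using t by (auto simp: u_def add_pos_nonneg)
      have "0 < 1 + t\<^sup>2" by (simp add: add_pos_nonneg)
      then have "(1 - u) / u = t\<^sup>2" unfolding u_def by (simp add: field_simps)
      then have "g u = t" using t by (simp add: g_def)
      with u show "t \<in> g ` ?S" by force
    qed
  qed
  have eq: "\<bar>g' u\<bar> * ?f (g u) = exp (- x\<^sup>2 / (2 * u)) / (2 * sqrt (u * (1 - u)))" if u: "u \<in> ?S" for u
  proof -
    have u0: "0 < u" "u < 1" using u by auto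
    have q: "0 < (1 - u) / u" using u0 by simp
    have g2: "(g u)\<^sup>2 = (1 - u) / u" unfolding g_def by (rule real_sqrt_pow2) (use q in linarith)
    have h: "1 + (g u)\<^sup>2 = 1 / u" unfolding g2 using u0 by (simp add: diff_divide_distrib)
    have e1: "- (x\<^sup>2 * (1 / u)) / 2 = - x\<^sup>2 / (2 * u)" by simp
    have fg: "?f (g u) = u * exp (- x\<^sup>2 / (2 * u))"
      unfolding h e1 by simp
    have gneg: "g' u = - (1 / (2 * u\<^sup>2 * sqrt ((1 - u) / u)))"
      unfolding g'_def by (simp add: divide_divide_eq_left mult_ac)
    have pos: "0 < 2 * u\<^sup>2 * sqrt ((1 - u) / u)" using q u0 by simp
    then have ag: "\<bar>g' u\<bar> = 1 / (2 * u\<^sup>2 * sqrt ((1 - u) / u))"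
      unfolding gneg by simp
    have s: "u * sqrt ((1 - u) / u) = sqrt (u * (1 - u))"
    proof -
      have "u * sqrt ((1 - u) / u) = sqrt (u\<^sup>2) * sqrt ((1 - u) / u)" using u0 by simp
      also have "\<dots> = sqrt (u\<^sup>2 * ((1 - u) / u))" by (rule real_sqrt_mult[symmetric])
      also have "u\<^sup>2 * ((1 - u) / u) = u * (1 - u)" using u0 by (simp add: power2_eq_square)
      finally show ?thesis .
    qed
    have "\<bar>g' u\<bar> * ?f (g u) = u * exp (- x\<^sup>2 / (2 * u)) / (2 * u\<^sup>2 * sqrt ((1 - u) / u))"
      unfolding ag fg by simp
    also have "\<dots> = exp (- x\<^sup>2 / (2 * u)) / (2 * (u * sqrt ((1 - u) / u)))"
      using u0 by (simp add: power2_eq_square)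
    finally show ?thesis by (simp only: s)
  qed
  have iff: "(\<lambda>u. \<bar>g' u\<bar> * ?f (g u)) absolutely_integrable_on ?S \<and> integral ?S (\<lambda>u. \<bar>g' u\<bar> * ?f (g u)) = pi * Qfun x
     \<longleftrightarrow> ?f absolutely_integrable_on (g ` ?S) \<and> integral (g ` ?S) ?f = pi * Qfun x"
    by (rule has_absolute_integral_change_of_variables_1'[OF _ der inj]) simp
  have AB: "(\<lambda>u. \<bar>g' u\<bar> * ?f (g u)) absolutely_integrable_on ?S \<and> integral ?S (\<lambda>u. \<bar>g' u\<bar> * ?f (g u)) = pi * Qfun x"
    by (rule iff[unfolded img, THEN iffD2, OF craig_t_HK[OF x]])
  then have AB1: "(\<lambda>u. \<bar>g' u\<bar> * ?f (g u)) absolutely_integrable_on ?S"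
    and AB2: "integral ?S (\<lambda>u. \<bar>g' u\<bar> * ?f (g u)) = pi * Qfun x" by (rule conjunct1, rule conjunct2)
  have "((\<lambda>u. \<bar>g' u\<bar> * ?f (g u)) has_integral (integral ?S (\<lambda>u. \<bar>g' u\<bar> * ?f (g u)))) ?S"
    by (rule integrable_integral[OF set_lebesgue_integral_eq_integral(1)[OF AB1]])
  then have "((\<lambda>u. \<bar>g' u\<bar> * ?f (g u)) has_integral (pi * Qfun x)) ?S"
    unfolding AB2 .
  then have HI: "((\<lambda>u. exp (- x\<^sup>2 / (2 * u)) / (2 * sqrt (u * (1 - u)))) has_integral (pi * Qfun x)) ?S"
    by (rule has_integral_cong[THEN iffD1, rotated]) (rule eq, assumption)
  have NN: "0 \<le> exp (- x\<^sup>2 / (2 * u)) / (2 * sqrt (u * (1 - u)))" if "u \<in> ?S" for u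
    using that by (intro divide_nonneg_nonneg) auto
  show ?thesis
    by (rule nn_integral_has_integral_lebesgue'[OF NN HI])
qed

lemma Ln_divide_Re_pos:
  fixes z w :: complex assumes z: "0 < Re z" and w: "0 < Re w"
  shows "Ln (z / w) = Ln z - Ln w"
proof -
  have z0: "z \<noteq> 0" and w0: "w \<noteq> 0" using z w by auto
  have wn: "w \<notin> \<real>\<^sub>\<le>\<^sub>0" using w by (auto simp: complex_nonpos_Reals_iff)
  have iw: "Ln (inverse w) = - Ln w" by (rule Ln_inverse[OF wn])
  have bz: "\<bar>Im (Ln z)\<bar> < pi/2" by (rule Re_Ln_pos_lt_imp[OF z])
  have bw: "\<bar>Im (Ln w)\<bar> < pi/2" by (rule Re_Ln_pos_lt_imp[OF w])
  have "Ln (z * inverse w) = Ln z + Ln (inverse w)"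
  proof -
    have "- pi < Im (Ln z) - Im (Ln w)" "Im (Ln z) - Im (Ln w) \<le> pi" using bz bw by (auto simp: abs_less_iff)
    then show ?thesis using Ln_times[of z "inverse w"] z0 w0 by (simp add: iw)
  qed
  then show ?thesis by (simp add: divide_complex_def iw)
qed

lemma cpowr_pos_real: "0 < t \<Longrightarrow> complex_of_real t powr z = exp (z * of_real (ln t))"
  by (simp add: powr_def Ln_of_real)

lemma key_factor:
  fixes a b :: complex and u p :: real
  assumes a: "0 < Re a" and u: "0 < u" and p: "0 < p"
  shows "(1 - complex_of_real (- p / (2 * u)) / a) powr (- b)
       = a powr b * complex_of_real (2 * u / p) powr b * (1 + 2 * a / complex_of_real p * complex_of_real u) powr (- b)"
proof -
  define r where "r = 2 * u / p"
  have r: "0 < r" using u p by (simp add: r_def)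
  define w where "w = complex_of_real r * a"
  define z where "z = 1 + w"
  have a0: "a \<noteq> 0" using a by auto
  have Rw: "0 < Re w" using r a by (simp add: w_def)
  have Rz: "0 < Re z" using Rw by (simp add: z_def)
  have w0: "w \<noteq> 0" and z0: "z \<noteq> 0" using Rw Rz by auto
  have e1: "1 - complex_of_real (- p / (2 * u)) / a = z / w"
    using u p a0 r by (simp add: z_def w_def r_def field_simps)
  have e2: "1 + 2 * a / complex_of_real p * complex_of_real u = z"
    using p by (simp add: z_def w_def r_def field_simps)
  have lw: "Ln w = of_real (ln r) + Ln a"
    unfolding w_def using Ln_times_of_real[OF r a0] by (simp add: Ln_of_real[OF r])
  have "(z / w) powr (- b) = exp (- b * (Ln z - Ln w))"
    using z0 w0 by (simp add: powr_def Ln_divide_Re_pos[OF Rz Rw])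
  also have "\<dots> = exp (b * Ln a) * exp (b * of_real (ln r)) * exp (- b * Ln z)"
    by (simp add: lw exp_add[symmetric] algebra_simps)
  also have "\<dots> = a powr b * complex_of_real r powr b * z powr (- b)"
    using a0 z0 r by (simp add: powr_def Ln_of_real)
  finally have "(z / w) powr (- b) = a powr b * complex_of_real r powr b * z powr (- b)" .
  then show ?thesis unfolding e1 e2 r_def[symmetric] .
qed

lemma key_k:
  fixes a b :: "nat \<Rightarrow> complex" and I :: "nat set" and c :: complex and u p :: real
  assumes I: "finite I" and a: "\<And>i. i \<in> I \<Longrightarrow> 0 < Re (a i)" and u: "0 < u" "u < 1" and p: "0 < p"
  shows "complex_of_real (1 / (2 * sqrt (u * (1 - u)))) * (c * (\<Prod>i\<in>I. (1 - complex_of_real (- p / (2 * u)) / a i) powr (- b i)))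
   = (1 / 2) * (c * (\<Prod>i\<in>I. a i powr b i) * complex_of_real (2 / p) powr (\<Sum>i\<in>I. b i)) *
     (complex_of_real u powr (- 1 / 2 + (\<Sum>i\<in>I. b i)) * complex_of_real (1 - u) powr (- 1 / 2)
      * (\<Prod>i\<in>I. (1 + 2 * a i / complex_of_real p * complex_of_real u) powr (- b i)))"
proof -
  define B where "B = (\<Sum>i\<in>I. b i)"
  define A where "A = (\<Prod>i\<in>I. a i powr b i)"
  define Z where "Z = (\<Prod>i\<in>I. (1 + 2 * a i / complex_of_real p * complex_of_real u) powr (- b i))"
  define U where "U = complex_of_real u powr (- 1 / 2)"
  define V where "V = complex_of_real (1 - u) powr (- 1 / 2)"
  define P where "P = complex_of_real (2 / p) powr B"
  define UB where "UB = complex_of_real u powr B"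
  have r: "0 < 2 * u / p" using u p by simp
  have "(\<Prod>i\<in>I. (1 - complex_of_real (- p / (2 * u)) / a i) powr (- b i))
      = (\<Prod>i\<in>I. a i powr b i * complex_of_real (2 * u / p) powr b i
            * (1 + 2 * a i / complex_of_real p * complex_of_real u) powr (- b i))"
    by (rule prod.cong[OF refl], rule key_factor[OF a u(1) p])
  also have "\<dots> = A * (\<Prod>i\<in>I. complex_of_real (2 * u / p) powr b i) * Z"
    by (simp add: A_def Z_def prod.distrib)
  also have "(\<Prod>i\<in>I. complex_of_real (2 * u / p) powr b i) = complex_of_real (2 * u / p) powr B"
    unfolding cpowr_pos_real[OF r] B_def using I by (simp add: exp_sum sum_distrib_right)
  also have "complex_of_real (2 * u / p) powr B = P * UB"
  proof -
    have "ln (2 * u / p) = ln (2 / p) + ln u" using u p by (simp add: ln_mult ln_div)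
    moreover have "0 < 2 / p" using p by simp
    ultimately show ?thesis using r u p
      unfolding P_def UB_def cpowr_pos_real[OF r] cpowr_pos_real[OF \<open>0 < 2 / p\<close>] cpowr_pos_real[OF u(1)]
      by (simp add: exp_add[symmetric] distrib_left)
  qed
  finally have L: "(\<Prod>i\<in>I. (1 - complex_of_real (- p / (2 * u)) / a i) powr (- b i)) = A * (P * UB) * Z" .
  have UU: "complex_of_real u powr (- 1 / 2 + B) = U * UB"
    unfolding U_def UB_def cpowr_pos_real[OF u(1)] by (simp add: exp_add[symmetric] algebra_simps)
  have W: "complex_of_real (1 / (2 * sqrt (u * (1 - u)))) = 1 / 2 * U * V"
  proof -
    have "1 / sqrt (u * (1 - u)) = u powr (- 1 / 2) * (1 - u) powr (- 1 / 2)"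
      using u by (simp add: powr_minus_divide powr_half_sqrt[symmetric] powr_mult[symmetric] divide_simps)
    then have e: "1 / (2 * sqrt (u * (1 - u))) = 1 / 2 * (u powr (- 1 / 2) * (1 - u) powr (- 1 / 2))"
      by simp
    have UV: "U = complex_of_real (u powr (- 1 / 2))" "V = complex_of_real ((1 - u) powr (- 1 / 2))"
      using u by (simp_all add: U_def V_def powr_of_real[symmetric])
    show ?thesis unfolding e of_real_mult UV by simp
  qed
  show ?thesis
    unfolding L W UU B_def[symmetric] A_def[symmetric] Z_def[symmetric] P_def[symmetric] V_def[symmetric]
    by (simp add: mult_ac)
qed

lemma Z_bounded:
  fixes a b :: "nat \<Rightarrow> complex" and I :: "nat set" and p :: real
  assumes a: "\<And>i. i \<in> I \<Longrightarrow> 0 < Re (a i)" and p: "0 < p"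
  shows "\<exists>C. \<forall>u\<in>{0..1::real}. norm (\<Prod>i\<in>I. (1 + 2 * a i / complex_of_real p * complex_of_real u) powr (- b i)) \<le> C"
proof -
  have re: "0 < Re (1 + 2 * a i / complex_of_real p * complex_of_real u)" if "i \<in> I" "u \<in> {0..1}" for i u
  proof -
    have "Re (1 + 2 * a i / complex_of_real p * complex_of_real u) = 1 + 2 * Re (a i) / p * u"
      by simp
    moreover have "0 \<le> 2 * Re (a i) / p * u" using a[OF that(1)] p that(2) by simp
    ultimately show ?thesis by simp
  qed
  have "continuous_on {0..1::real} (\<lambda>u. \<Prod>i\<in>I. (1 + 2 * a i / complex_of_real p * complex_of_real u) powr (- b i))"
  proof (intro continuous_on_prod continuous_on_powr_complex)
    fix i assume i: "i \<in> I"
    show "{0..1::real} \<subseteq> {z. 0 \<le> Re (1 + 2 * a i / complex_of_real p * complex_of_real z) \<or> Im (1 + 2 * a i / complex_of_real p * complex_of_real z) \<noteq> 0}"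
      using re[OF i] by (auto intro: less_imp_le)
    show "\<And>z. z \<in> {0..1} \<Longrightarrow> 1 + 2 * a i / complex_of_real p * complex_of_real z = 0 \<Longrightarrow> 0 < Re (- b i)"
      using re[OF i] by fastforce
  qed (use p in \<open>auto intro!: continuous_intros\<close>)
  then have "compact ((\<lambda>u. \<Prod>i\<in>I. (1 + 2 * a i / complex_of_real p * complex_of_real u) powr (- b i)) ` {0..1})"
    by (rule compact_continuous_image) simp
  then have "bounded ((\<lambda>u. \<Prod>i\<in>I. (1 + 2 * a i / complex_of_real p * complex_of_real u) powr (- b i)) ` {0..1})"
    by (rule compact_imp_bounded)
  then show ?thesis unfolding bounded_iff by auto
qed

lemma T_integrable:
  fixes a b :: "nat \<Rightarrow> complex" and I :: "nat set" and p :: real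
  assumes a: "\<And>i. i \<in> I \<Longrightarrow> 0 < Re (a i)" and p: "0 < p" and B: "0 < Re (\<Sum>i\<in>I. b i)"
    and W: "set_integrable lborel {0<..<1::real} (\<lambda>u. 1 / (2 * sqrt (u * (1 - u))))"
  shows "set_integrable lborel {0<..<1::real} (\<lambda>u. complex_of_real u powr (- 1 / 2 + (\<Sum>i\<in>I. b i))
      * complex_of_real (1 - u) powr (- 1 / 2)
      * (\<Prod>i\<in>I. (1 + 2 * a i / complex_of_real p * complex_of_real u) powr (- b i)))"
proof -
  let ?S = "{0<..<1::real}"
  let ?Z = "\<lambda>u. \<Prod>i\<in>I. (1 + 2 * a i / complex_of_real p * complex_of_real u) powr (- b i)"
  let ?T = "\<lambda>u. complex_of_real u powr (- 1 / 2 + (\<Sum>i\<in>I. b i)) * complex_of_real (1 - u) powr (- 1 / 2) * ?Z u"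
  from Z_bounded[OF a p, where b=b] obtain C where C': "\<forall>u\<in>{0..1}. norm (?Z u) \<le> C" ..
  then have C: "\<And>u. u \<in> {0..1} \<Longrightarrow> norm (?Z u) \<le> C" by (rule bspec)
  have re: "0 < Re (1 + 2 * a i / complex_of_real p * complex_of_real u)" if "i \<in> I" "u \<in> {0..1}" for i u
  proof -
    have "Re (1 + 2 * a i / complex_of_real p * complex_of_real u) = 1 + 2 * Re (a i) / p * u"
      by simp
    moreover have "0 \<le> 2 * Re (a i) / p * u" using a[OF that(1)] p that(2) by simp
    ultimately show ?thesis by simp
  qed
  have contT: "continuous_on ?S ?T"
  proof (intro continuous_on_mult continuous_on_prod continuous_on_powr_complex)
    fix i assume i: "i \<in> I"
    show "?S \<subseteq> {z. 0 \<le> Re (1 + 2 * a i / complex_of_real p * complex_of_real z) \<or> Im (1 + 2 * a i / complex_of_real p * complex_of_real z) \<noteq> 0}"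
      using re[OF i] by (auto intro: less_imp_le)
    show "0 < Re (- b i)" if z: "z \<in> ?S" and e: "1 + 2 * a i / complex_of_real p * complex_of_real z = 0" for z
    proof -
      have "0 < Re (1 + 2 * a i / complex_of_real p * complex_of_real z)" using z by (intro re[OF i]) auto
      with e show ?thesis by simp
    qed
  qed (use p in \<open>auto intro!: continuous_intros\<close>)
  have meas: "(\<lambda>u. indicator ?S u *\<^sub>R ?T u) \<in> borel_measurable lborel"
    using borel_measurable_continuous_on_indicator[OF _ contT] by simp
  have Wi: "integrable lborel (\<lambda>u. indicator ?S u *\<^sub>R (2 * C * (1 / (2 * sqrt (u * (1 - u))))))"
  proof -
    have "integrable lborel (\<lambda>u. (2 * C) * (indicator ?S u *\<^sub>R (1 / (2 * sqrt (u * (1 - u))))))"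
      using W unfolding set_integrable_def by (rule integrable_mult_right)
    moreover have "(\<lambda>u. (2 * C) * (indicator ?S u *\<^sub>R (1 / (2 * sqrt (u * (1 - u))))))
        = (\<lambda>u. indicator ?S u *\<^sub>R (2 * C * (1 / (2 * sqrt (u * (1 - u))))))"
      by (auto simp: fun_eq_iff indicator_def)
    ultimately show ?thesis by simp
  qed
  show ?thesis unfolding set_integrable_def
  proof (rule Bochner_Integration.integrable_bound[OF Wi meas], rule AE_I2)
    fix u :: real
    show "norm (indicator ?S u *\<^sub>R ?T u) \<le> norm (indicator ?S u *\<^sub>R (2 * C * (1 / (2 * sqrt (u * (1 - u))))))"
    proof (cases "u \<in> ?S")
      case True
      then have u: "0 < u" "u < 1" by auto
      have C0: "0 \<le> C" using C[of 0] by (meson atLeastAtMost_iff norm_ge_zero order_trans zero_le_one order_refl)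
      have n1: "norm (complex_of_real u powr (- 1 / 2 + (\<Sum>i\<in>I. b i))) = u powr (- 1 / 2 + Re (\<Sum>i\<in>I. b i))"
        using u by (subst norm_powr_real_powr) auto
      also have "\<dots> \<le> u powr (- 1 / 2)"
        using u B by (intro powr_mono') auto
      finally have n1: "norm (complex_of_real u powr (- 1 / 2 + (\<Sum>i\<in>I. b i))) \<le> u powr (- 1 / 2)" .
      have n2: "norm (complex_of_real (1 - u) powr (- 1 / 2)) = (1 - u) powr (- 1 / 2)"
        using u by (subst norm_powr_real_powr) auto
      have n3: "norm (?Z u) \<le> C" using C u by auto
      have "norm (?T u) \<le> u powr (- 1 / 2) * (1 - u) powr (- 1 / 2) * C"
        unfolding norm_mult n2 by (intro mult_mono n1 n3 mult_nonneg_nonneg) auto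
      also have "u powr (- 1 / 2) * (1 - u) powr (- 1 / 2) = 1 / sqrt (u * (1 - u))"
        using u by (simp add: powr_minus_divide powr_half_sqrt[symmetric] powr_mult[symmetric] divide_simps)
      finally have "norm (?T u) \<le> 1 / sqrt (u * (1 - u)) * C" .
      moreover have "0 \<le> 1 / sqrt (u * (1 - u)) * C" using u C0 by simp
      ultimately show ?thesis using True C0 u by (simp add: abs_mult field_simps)
    qed simp
  qed
qed


lemma Qfun_measurable: "Qfun \<in> borel_measurable borel"
proof -
  have I: "integrable lborel (\<lambda>y. indicator {x..} y *\<^sub>R exp (- y\<^sup>2 / 2))" for x :: real
    by (intro integrable_mult_indicator integrable_gauss) auto
  have "mono (\<lambda>x. - Qfun x)"
  proof (rule monoI)
    fix x y :: real assume xy: "x \<le> y"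
    have "(LBINT t:{y..}. exp (- t\<^sup>2 / 2)) \<le> (LBINT t:{x..}. exp (- t\<^sup>2 / 2))"
      unfolding set_lebesgue_integral_def
      using xy by (intro integral_mono I) (auto simp: indicator_def)
    then show "- Qfun x \<le> - Qfun y" unfolding Qfun_def by (simp add: divide_right_mono)
  qed
  then have "(\<lambda>x. - Qfun x) \<in> borel_measurable borel" by (rule borel_measurable_mono)
  then have "(\<lambda>x. - (- Qfun x)) \<in> borel_measurable borel" by measurable
  then show ?thesis by simp
qed

lemma W_integrable: "set_integrable lborel {0<..<1::real} (\<lambda>u. 1 / (2 * sqrt (u * (1 - u))))"
proof -
  have "(\<integral>\<^sup>+u. ennreal (exp (- 0\<^sup>2 / (2 * u)) / (2 * sqrt (u * (1 - u)))) * indicator {0<..<1} u \<partial>lborel)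
     = ennreal (pi * Qfun 0)" by (rule craig_u) simp
  then have fin: "(\<integral>\<^sup>+u. ennreal (indicator {0<..<1} u *\<^sub>R (1 / (2 * sqrt (u * (1 - u))))) \<partial>lborel) < \<infinity>"
    by (simp add: indicator_mult_ennreal mult.commute)
  show ?thesis unfolding set_integrable_def
    by (rule integrableI_nonneg[OF _ _ fin]) (auto simp: indicator_def)
qed

lemma real_identity:
  fixes M :: "'a measure" and \<gamma> :: "'a \<Rightarrow> real" and p :: real
  assumes M: "prob_space M" and g[measurable]: "\<gamma> \<in> borel_measurable M"
    and nn: "AE \<omega> in M. \<gamma> \<omega> \<ge> 0" and p: "p > 0"
  shows "pi * integral\<^sup>L M (\<lambda>\<omega>. Qfun (sqrt (p * \<gamma> \<omega>)))
     = (LBINT u:{0<..<1}. 1 / (2 * sqrt (u * (1 - u))) * integral\<^sup>L M (\<lambda>\<omega>. exp ((- p / (2 * u)) * \<gamma> \<omega>)))"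
proof -
  interpret prob_space M by (rule M)
  interpret P: pair_sigma_finite M lborel
    by (intro pair_sigma_finite.intro sigma_finite_measure_axioms lborel.sigma_finite_measure_axioms)
  let ?S = "{0<..<1::real}"
  let ?W = "\<lambda>u::real. 1 / (2 * sqrt (u * (1 - u)))"
  let ?L = "\<lambda>u::real. integral\<^sup>L M (\<lambda>\<omega>. exp ((- p / (2 * u)) * \<gamma> \<omega>))"
  let ?F = "\<lambda>\<omega> u. ennreal (exp ((- p / (2 * u)) * \<gamma> \<omega>) * ?W u) * indicator ?S u"
  have Qm[measurable]: "Qfun \<in> borel_measurable borel" by (rule Qfun_measurable)
  have "integral\<^sup>L M (\<lambda>\<omega>. pi * Qfun (sqrt (p * \<gamma> \<omega>))) = enn2real (\<integral>\<^sup>+\<omega>. ennreal (pi * Qfun (sqrt (p * \<gamma> \<omega>))) \<partial>M)"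
    by (rule integral_eq_nn_integral) (auto intro!: mult_nonneg_nonneg Qfun_nonneg)
  also have "(\<integral>\<^sup>+\<omega>. ennreal (pi * Qfun (sqrt (p * \<gamma> \<omega>))) \<partial>M) = (\<integral>\<^sup>+\<omega>. \<integral>\<^sup>+u. ?F \<omega> u \<partial>lborel \<partial>M)"
  proof (rule nn_integral_cong_AE)
    show "AE \<omega> in M. ennreal (pi * Qfun (sqrt (p * \<gamma> \<omega>))) = (\<integral>\<^sup>+u. ?F \<omega> u \<partial>lborel)"
      using nn
    proof eventually_elim
      fix \<omega> assume g0: "0 \<le> \<gamma> \<omega>"
      have pg: "0 \<le> p * \<gamma> \<omega>" using g0 p by (intro mult_nonneg_nonneg) auto
      have x: "0 \<le> sqrt (p * \<gamma> \<omega>)" using pg by simp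
      have sq: "(sqrt (p * \<gamma> \<omega>))\<^sup>2 = p * \<gamma> \<omega>" using pg by simp
      have "ennreal (pi * Qfun (sqrt (p * \<gamma> \<omega>)))
          = (\<integral>\<^sup>+u. ennreal (exp (- (sqrt (p * \<gamma> \<omega>))\<^sup>2 / (2 * u)) / (2 * sqrt (u * (1 - u)))) * indicator ?S u \<partial>lborel)"
        by (rule craig_u[OF x, symmetric])
      also have "\<dots> = (\<integral>\<^sup>+u. ?F \<omega> u \<partial>lborel)"
        unfolding sq by (intro nn_integral_cong) (simp add: field_simps)
      finally show "ennreal (pi * Qfun (sqrt (p * \<gamma> \<omega>))) = (\<integral>\<^sup>+u. ?F \<omega> u \<partial>lborel)" .
    qed
  qed
  also have "(\<integral>\<^sup>+\<omega>. \<integral>\<^sup>+u. ?F \<omega> u \<partial>lborel \<partial>M) = (\<integral>\<^sup>+u. \<integral>\<^sup>+\<omega>. ?F \<omega> u \<partial>M \<partial>lborel)"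
    by (rule P.Fubini'[symmetric]) measurable
  also have "\<dots> = (\<integral>\<^sup>+u. ennreal (indicator ?S u * (?W u * ?L u)) \<partial>lborel)"
  proof (rule nn_integral_cong)
    fix u :: real
    show "(\<integral>\<^sup>+\<omega>. ?F \<omega> u \<partial>M) = ennreal (indicator ?S u * (?W u * ?L u))"
    proof (cases "u \<in> ?S")
      case True
      then have u: "0 < u" "u < 1" by auto
      have W0: "0 \<le> ?W u" using u by simp
      have int: "integrable M (\<lambda>\<omega>. exp ((- p / (2 * u)) * \<gamma> \<omega>))"
      proof (rule integrable_const_bound[where B=1])
        show "AE \<omega> in M. norm (exp ((- p / (2 * u)) * \<gamma> \<omega>)) \<le> 1"
          using nn
        proof eventually_elim
          fix \<omega> assume "0 \<le> \<gamma> \<omega>"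
          then have "(- p / (2 * u)) * \<gamma> \<omega> \<le> 0" using u p
            by (intro mult_nonpos_nonneg) (auto simp: divide_nonneg_pos)
          then show "norm (exp ((- p / (2 * u)) * \<gamma> \<omega>)) \<le> 1" by simp
        qed
      qed measurable
      have "(\<integral>\<^sup>+\<omega>. ?F \<omega> u \<partial>M) = (\<integral>\<^sup>+\<omega>. ennreal (exp ((- p / (2 * u)) * \<gamma> \<omega>) * ?W u) \<partial>M)"
        using True by simp
      also have "\<dots> = ennreal (integral\<^sup>L M (\<lambda>\<omega>. exp ((- p / (2 * u)) * \<gamma> \<omega>) * ?W u))"
        by (rule nn_integral_eq_integral) (use int W0 in auto)
      also have "\<dots> = ennreal (indicator ?S u * (?W u * ?L u))"
        using True by (simp add: mult.commute)
      finally show ?thesis .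
    qed simp
  qed
  finally have A: "integral\<^sup>L M (\<lambda>\<omega>. pi * Qfun (sqrt (p * \<gamma> \<omega>)))
      = enn2real (\<integral>\<^sup>+u. ennreal (indicator ?S u * (?W u * ?L u)) \<partial>lborel)" .
  have Lm: "?L \<in> borel_measurable lborel"
  proof -
    have "(\<lambda>(u, \<omega>). exp ((- p / (2 * u)) * \<gamma> \<omega>)) \<in> borel_measurable (lborel \<Otimes>\<^sub>M M)" by measurable
    then show ?thesis by (rule borel_measurable_lebesgue_integral[where f="\<lambda>u \<omega>. exp ((- p / (2 * u)) * \<gamma> \<omega>)"])
  qed
  have B: "(LBINT u:?S. ?W u * ?L u) = enn2real (\<integral>\<^sup>+u. ennreal (indicator ?S u * (?W u * ?L u)) \<partial>lborel)"
    unfolding set_lebesgue_integral_def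
    by (subst integral_eq_nn_integral) (use Lm in \<open>auto intro!: mult_nonneg_nonneg integral_nonneg simp: indicator_def\<close>)
  show ?thesis using A B by simp
qed

theorem corollary2:
  fixes M :: "'a measure" and \<gamma> :: "'a \<Rightarrow> real"
    and K :: nat and n :: "nat \<Rightarrow> nat"
    and c :: "nat \<Rightarrow> complex" and a b :: "nat \<Rightarrow> nat \<Rightarrow> complex"
    and p :: real
  assumes "prob_space M"
    and "\<gamma> \<in> borel_measurable M"
    and "AE \<omega> in M. \<gamma> \<omega> \<ge> 0"
    and mgf: "\<And>s::real. s \<le> 0 \<Longrightarrow>
        complex_of_real (integral\<^sup>L M (\<lambda>\<omega>. exp (s * \<gamma> \<omega>)))
          = (\<Sum>k<K. c k * (\<Prod>i<n k. (1 - complex_of_real s / a k i) powr (- b k i)))"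
    and "\<And>k i. k < K \<Longrightarrow> i < n k \<Longrightarrow> Re (a k i) > 0"
    and "\<And>k. k < K \<Longrightarrow> (\<Sum>i<n k. b k i) \<in> \<real> \<and> Re (\<Sum>i<n k. b k i) > 0"
    and "(\<Sum>k<K. c k) = 1"
    and "p > 0"
  shows "complex_of_real (integral\<^sup>L M (\<lambda>\<omega>. Qfun (sqrt (p * \<gamma> \<omega>))))
    = (1 / (2 * pi)) * (\<Sum>k<K. c k * (\<Prod>i<n k. a k i powr b k i)
        * complex_of_real (2 / p) powr (\<Sum>i<n k. b k i)
        * (LBINT u:{0<..<1}.
             complex_of_real u powr (- 1 / 2 + (\<Sum>i<n k. b k i))
             * complex_of_real (1 - u) powr (- 1 / 2)
             * (\<Prod>i<n k. (1 + 2 * a k i / complex_of_real p * complex_of_real u) powr (- b k i))))"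
proof -
  interpret prob_space M by fact
  note g = assms(2)
  note nn = assms(3)
  note aR = assms(5)
  note bR = assms(6)
  note p = assms(8)
  let ?S = "{0<..<1::real}"
  let ?W = "\<lambda>u::real. 1 / (2 * sqrt (u * (1 - u)))"
  let ?L = "\<lambda>u::real. integral\<^sup>L M (\<lambda>\<omega>. exp ((- p / (2 * u)) * \<gamma> \<omega>))"
  let ?B = "\<lambda>k. \<Sum>i<n k. b k i"
  let ?K = "\<lambda>k. c k * (\<Prod>i<n k. a k i powr b k i) * complex_of_real (2 / p) powr ?B k"
  let ?T = "\<lambda>k u. complex_of_real u powr (- 1 / 2 + ?B k) * complex_of_real (1 - u) powr (- 1 / 2)
             * (\<Prod>i<n k. (1 + 2 * a k i / complex_of_real p * complex_of_real u) powr (- b k i))"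
  let ?A = "\<lambda>k u. complex_of_real (?W u) * (c k * (\<Prod>i<n k. (1 - complex_of_real (- p / (2 * u)) / a k i) powr (- b k i)))"
  have R: "pi * integral\<^sup>L M (\<lambda>\<omega>. Qfun (sqrt (p * \<gamma> \<omega>))) = (LBINT u:?S. ?W u * ?L u)"
    by (rule real_identity[OF assms(1) g nn p])
  have Tint: "set_integrable lborel ?S (?T k)" if k: "k < K" for k
    using T_integrable[of "{..<n k}" "a k" p "b k"] aR[OF k] p bR[OF k] W_integrable by auto
  have AK: "?A k u = (1 / 2) * ?K k * ?T k u" if k: "k < K" and u: "u \<in> ?S" for k u
    using u p by (intro key_k) (auto intro: aR[OF k])
  have Aint: "integrable lborel (\<lambda>u. indicator ?S u *\<^sub>R ?A k u)" if k: "k < K" for k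
  proof -
    have "integrable lborel (\<lambda>u. ((1 / 2) * ?K k) * (indicator ?S u *\<^sub>R ?T k u))"
      using Tint[OF k] unfolding set_integrable_def by (rule integrable_mult_right)
    moreover have "(\<lambda>u. ((1 / 2) * ?K k) * (indicator ?S u *\<^sub>R ?T k u)) = (\<lambda>u. indicator ?S u *\<^sub>R ?A k u)"
      using AK[OF k] by (auto simp: fun_eq_iff indicator_def)
    ultimately show ?thesis by simp
  qed
  have "complex_of_real (integral\<^sup>L M (\<lambda>\<omega>. Qfun (sqrt (p * \<gamma> \<omega>))))
      = (1 / pi) * complex_of_real (LBINT u:?S. ?W u * ?L u)"
  proof -
    have R': "integral\<^sup>L M (\<lambda>\<omega>. Qfun (sqrt (p * \<gamma> \<omega>))) = (1 / pi) * (LBINT u:?S. ?W u * ?L u)"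
      unfolding R[symmetric] by simp
    show ?thesis unfolding R' by simp
  qed
  also have "complex_of_real (LBINT u:?S. ?W u * ?L u) = (LBINT u:?S. complex_of_real (?W u * ?L u))"
  proof -
    have e: "(\<lambda>u. complex_of_real (indicator ?S u *\<^sub>R (?W u * ?L u))) = (\<lambda>u. indicator ?S u *\<^sub>R complex_of_real (?W u * ?L u))"
      by (auto simp: fun_eq_iff indicator_def)
    show ?thesis unfolding set_lebesgue_integral_def integral_complex_of_real[symmetric] e by (rule refl)
  qed
  also have "\<dots> = (LBINT u:?S. (\<Sum>k<K. ?A k u))"
  proof -
    have pw: "complex_of_real (?W u * ?L u) = (\<Sum>k<K. ?A k u)" if u: "u \<in> ?S" for u
    proof -
      have hL: "complex_of_real (?L u) = (\<Sum>k<K. c k * (\<Prod>i<n k. (1 - complex_of_real (- p / (2 * u)) / a k i) powr (- b k i)))"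
        using u p by (intro assms(4)) (auto simp: divide_nonneg_pos)
      show ?thesis
        unfolding of_real_mult hL sum_distrib_left by (rule refl)
    qed
    show ?thesis by (rule set_lebesgue_integral_cong) (simp, blast intro: pw)
  qed
  also have "\<dots> = (\<Sum>k<K. (LBINT u:?S. ?A k u))"
    unfolding set_lebesgue_integral_def scaleR_sum_right
    by (rule Bochner_Integration.integral_sum) (use Aint in auto)
  also have "\<dots> = (\<Sum>k<K. (1 / 2) * ?K k * (LBINT u:?S. ?T k u))"
  proof (rule sum.cong[OF refl])
    fix k assume "k \<in> {..<K}"
    then have k: "k < K" by simp
    have "(LBINT u:?S. ?A k u) = (LBINT u:?S. (1 / 2) * ?K k * ?T k u)"
      by (rule set_lebesgue_integral_cong) (simp, intro allI impI, erule AK[OF k])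
    also have "\<dots> = (1 / 2) * ?K k * (LBINT u:?S. ?T k u)"
      by (rule set_integral_mult_right)
    finally show "(LBINT u:?S. ?A k u) = (1 / 2) * ?K k * (LBINT u:?S. ?T k u)" .
  qed
  finally show ?thesis by (simp add: sum_distrib_left field_simps)
qed


end
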